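(* Let $\mathcal A$ be a finite alphabet and let $W$ be a finite nonempty set of nonempty words over $\mathcal A$ which are pairwise anagrams (all words of $W$ have the same Parikh vector, i.e. each letter occurs the same number of times in each of them). Let $\psi$ be a morphism on $\mathcal A$ such that for every $a\in\mathcal A$, $\psi(a)$ is a nonempty concatenation of words from $W$, and suppose $\psi$ admits an iterative fixed point. Then the ratio $d=|\psi(w)|/|w|$ is the same for all $w\in W$, and every iterative fixed point of $\psi$ is $d$-automatic.
   Context: An iterative fixed point of a morphism $\psi$ is the infinite word $\lim_{n\to\infty}\psi^n(a)$ for a letter $a$ such that $\psi(a)$ begins with $a$ and $|\psi^n(a)|\to\infty$. For an integer $d\ge 2$, a sequence is $d$-automatic if it is the image under a letter-to-letter map of a fixed point of a morphism all of whose letter-images have length $d$. *)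

theory Defs
  imports Complex_Main "HOL-Library.Multiset"
begin

definition morph_ext :: "('a \<Rightarrow> 'a list) \<Rightarrow> 'a list \<Rightarrow> 'a list" where
  "morph_ext psi w = concat (map psi w)"

definition iter_fixed_point :: "('a \<Rightarrow> 'a list) \<Rightarrow> 'a \<Rightarrow> (nat \<Rightarrow> 'a) \<Rightarrow> bool" where
  "iter_fixed_point psi a x \<longleftrightarrow>
     (\<exists>u. psi a = a # u) \<and>
     filterlim (\<lambda>n. length ((morph_ext psi ^^ n) [a])) at_top sequentially \<and>
     (\<forall>n i. i < length ((morph_ext psi ^^ n) [a]) \<longrightarrow> x i = ((morph_ext psi ^^ n) [a]) ! i)"

text \<open>d-automatic sequences (d \<ge> 2): letter-to-letter image of a fixed point of a
  d-uniform morphism over a finite alphabet (encoded, w.l.o.g., as a finite set of naturals).\<close>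
definition automatic :: "nat \<Rightarrow> (nat \<Rightarrow> 'a) \<Rightarrow> bool" where
  "automatic d x \<longleftrightarrow> d \<ge> 2 \<and>
     (\<exists>(B :: nat set) (tau :: nat \<Rightarrow> nat list) b y (f :: nat \<Rightarrow> 'a).
        finite B \<and> b \<in> B \<and>
        (\<forall>c\<in>B. length (tau c) = d \<and> set (tau c) \<subseteq> B) \<and>
        iter_fixed_point tau b y \<and>
        (\<forall>n. x n = f (y n)))"

end

theory Submission
  imports Defs "HOL-Library.Countable"
begin

lemma morph_ext_append: "morph_ext psi (xs @ ys) = morph_ext psi xs @ morph_ext psi ys"
  by (simp add: morph_ext_def)

lemma morph_ext_Cons: "morph_ext psi (x # ys) = psi x @ morph_ext psi ys"
  by (simp add: morph_ext_def)

lemma morph_ext_concat: "morph_ext psi (concat xss) = concat (map (morph_ext psi) xss)"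
  by (induction xss) (simp_all add: morph_ext_append, simp add: morph_ext_def)

lemma funpow_morph_append:
  "(morph_ext psi ^^ n) (xs @ ys) = (morph_ext psi ^^ n) xs @ (morph_ext psi ^^ n) ys"
  by (induction n) (simp_all add: morph_ext_append)

lemma concat_nth_uniform:
  assumes "\<forall>xs\<in>set xss. length xs = L" "i < length (concat xss)"
  shows "concat xss ! i = xss ! (i div L) ! (i mod L)"
  using assms
proof (induction xss arbitrary: i)
  case Nil then show ?case by simp
next
  case (Cons x xss)
  have lx: "length x = L" using Cons.prems by simp
  show ?case
  proof (cases "i < L")
    case True
    then show ?thesis using lx by (simp add: nth_append)
  next
    case False
    have L0: "L > 0"
    proof (rule ccontr)
      assume "\<not> L > 0"
      then have "\<forall>xs\<in>set (x # xss). xs = []" using Cons.prems(1) by auto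
      then have "concat (x # xss) = []" by (simp only: concat_eq_Nil_conv)
      then show False using Cons.prems(2) by (metis list.size(3) not_less0)
    qed
    have "concat (x # xss) ! i = concat xss ! (i - L)" using False lx by (simp add: nth_append)
    also have "\<dots> = xss ! ((i - L) div L) ! ((i - L) mod L)"
      using Cons.IH[of "i - L"] Cons.prems lx False by auto
    also have "\<dots> = (x # xss) ! (i div L) ! (i mod L)"
      using False L0 by (simp add: le_div_geq le_mod_geq)
    finally show ?thesis .
  qed
qed

lemma uniform_fixed_point:
  fixes tau :: "'b \<Rightarrow> 'b list" and y :: "nat \<Rightarrow> 'b"
  assumes d2: "d \<ge> 2" and ty: "\<And>n. tau (y n) = map (\<lambda>k. y (n*d+k)) [0..<d]"
  shows "iter_fixed_point tau (y 0) y"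
proof -
  have step: "morph_ext tau (map y [0..<m]) = map y [0..<m*d]" for m
  proof (induction m)
    case 0 then show ?case by (simp add: morph_ext_def)
  next
    case (Suc m)
    have e1: "[0..<Suc m * d] = [0..<m*d] @ [m*d..<m*d+d]"
    proof -
      have "Suc m * d = m*d + d" by simp
      then show ?thesis using upt_add_eq_append[of 0 "m*d" d] by (simp only: zero_le simp_thms)
    qed
    have e2: "map y [m*d..<m*d+d] = map (\<lambda>k. y (m*d+k)) [0..<d]"
      by (rule nth_equalityI) auto
    have "morph_ext tau (map y [0..<Suc m]) = morph_ext tau (map y [0..<m]) @ tau (y m)"
      by (simp add: morph_ext_def)
    also have "\<dots> = map y [0..<m*d] @ map y [m*d..<m*d+d]"
      using Suc e2 ty by simp
    also have "\<dots> = map y [0..<Suc m * d]" using e1 by simp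
    finally show ?case .
  qed
  have pw: "(morph_ext tau ^^ n) [y 0] = map y [0..<d^n]" for n
  proof (induction n)
    case 0 then show ?case by simp
  next
    case (Suc n) then show ?case by (simp add: step mult.commute)
  qed
  have h1: "\<exists>u. tau (y 0) = y 0 # u"
    using d2 by (simp add: ty upt_conv_Cons)
  have "filterlim (\<lambda>n::nat. n) at_top sequentially" by (rule filterlim_ident)
  moreover have "n \<le> d ^ n" for n :: nat
  proof -
    have "n < 2 ^ n" by (rule less_exp)
    also have "(2::nat) ^ n \<le> d ^ n" using d2 by (rule power_mono) simp
    finally show ?thesis by simp
  qed
  ultimately have h2: "filterlim (\<lambda>n. length ((morph_ext tau ^^ n) [y 0])) at_top sequentially"
    unfolding pw by (auto intro: filterlim_at_top_mono)
  show ?thesis unfolding iter_fixed_point_def using h1 h2 by (simp add: pw)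
qed


lemma concat_step:
  fixes F :: "'b list \<Rightarrow> 'b list" and z :: "nat \<Rightarrow> 'b list"
  assumes Fapp: "\<And>xs ys. F (xs @ ys) = F xs @ F ys" and Fnil: "F [] = []"
    and Fz: "\<And>n. F (z n) = concat (map (\<lambda>k. z (n*d+k)) [0..<d])"
  shows "F (concat (map z [0..<m])) = concat (map z [0..<m*d])"
proof (induction m)
  case 0 then show ?case using Fnil by simp
next
  case (Suc m)
  have e1: "[0..<Suc m * d] = [0..<m*d] @ [m*d..<m*d+d]"
  proof -
    have "Suc m * d = m*d + d" by simp
    then show ?thesis using upt_add_eq_append[of 0 "m*d" d] by (simp only: zero_le simp_thms)
  qed
  have e2: "map z [m*d..<m*d+d] = map (\<lambda>k. z (m*d+k)) [0..<d]"
    by (rule nth_equalityI) auto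
  have "F (concat (map z [0..<Suc m])) = F (concat (map z [0..<m])) @ F (z m)"
    by (simp add: Fapp)
  also have "\<dots> = concat (map z [0..<m*d]) @ concat (map z [m*d..<m*d+d])"
    using Suc e2 Fz by simp
  also have "\<dots> = concat (map z [0..<Suc m * d])" using e1 by simp
  finally show ?case .
qed

lemma length_concat_uniform:
  "\<forall>xs\<in>set xss. length xs = L \<Longrightarrow> length (concat xss) = length xss * L"
  by (induction xss) auto

lemma sum_list_ge_length:
  "\<forall>c\<in>set t. f c \<ge> (1::nat) \<Longrightarrow> sum_list (map f t) \<ge> length t"
  by (induction t) auto

function Om :: "('a \<Rightarrow> 'a list list) \<Rightarrow> nat \<Rightarrow> 'a list \<Rightarrow> nat \<Rightarrow> 'a list" where
  "Om ws d w1 q = (if q = 0 \<or> d < 2 then w1 else concat (map ws (Om ws d w1 (q div d))) ! (q mod d))"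
  by auto
termination by (relation "measure (\<lambda>(ws,d,w1,q). q)") auto

declare Om.simps [simp del]

lemma Om_0: "Om ws d w1 0 = w1"
  by (simp add: Om.simps)

lemma Om_rec:
  assumes "d \<ge> 2" "concat (map ws w1) ! 0 = w1"
  shows "Om ws d w1 q = concat (map ws (Om ws d w1 (q div d))) ! (q mod d)"
proof (cases "q = 0")
  case True then show ?thesis using assms by (simp add: Om_0)
next
  case False then show ?thesis using assms by (subst Om.simps) simp
qed

lemma Om_in:
  assumes "d \<ge> 2" "w1 \<in> W" "\<forall>w\<in>W. length (concat (map ws w)) = d"
    "\<forall>a. set (ws a) \<subseteq> W"
  shows "Om ws d w1 q \<in> W"
proof (induction q rule: less_induct)
  case (less q)
  show ?case
  proof (cases "q = 0")
    case True then show ?thesis using assms by (simp add: Om_0)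
  next
    case False
    then have "q div d < q" using assms(1) by simp
    then have IH: "Om ws d w1 (q div d) \<in> W" using less by simp
    have "q mod d < d" using assms(1) by simp
    then have "q mod d < length (concat (map ws (Om ws d w1 (q div d))))" using IH assms(3) by simp
    then have "concat (map ws (Om ws d w1 (q div d))) ! (q mod d) \<in> set (concat (map ws (Om ws d w1 (q div d))))"
      by (rule nth_mem)
    also have "\<dots> \<subseteq> W" using assms(4) by auto
    finally show ?thesis using False assms(1) by (subst Om.simps) simp
  qed
qed

lemma Om_block:
  assumes "d \<ge> 2" "concat (map ws w1) ! 0 = w1" "length (concat (map ws (Om ws d w1 q))) = d"
  shows "concat (map ws (Om ws d w1 q)) = map (\<lambda>s. Om ws d w1 (q*d+s)) [0..<d]"
proof (rule nth_equalityI)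
  show "length (concat (map ws (Om ws d w1 q))) = length (map (\<lambda>s. Om ws d w1 (q*d+s)) [0..<d])"
    using assms(3) by simp
next
  fix s assume "s < length (concat (map ws (Om ws d w1 q)))"
  then have s: "s < d" using assms(3) by simp
  have "(q*d+s) div d = q" "(q*d+s) mod d = s" using s by auto
  then show "concat (map ws (Om ws d w1 q)) ! s = map (\<lambda>s. Om ws d w1 (q*d+s)) [0..<d] ! s"
    using Om_rec[OF assms(1,2), of "q*d+s"] s by simp
qed


lemma arith_block:
  fixes n d k L :: nat
  assumes L0: "L > 0" and k: "k < d"
  shows "(n*d+k) div L = (n div L)*d + ((n mod L)*d+k) div L"
    and "(n*d+k) mod L = ((n mod L)*d+k) mod L"
    and "((n mod L)*d+k) div L < d"
proof -
  define q where "q = n div L"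
  define r where "r = n mod L"
  have n: "n = q*L + r" unfolding q_def r_def by simp
  have e: "n*d+k = (r*d+k) + (q*d)*L" unfolding n by (simp add: algebra_simps)
  show "(n*d+k) div L = (n div L)*d + ((n mod L)*d+k) div L"
    unfolding e q_def[symmetric] r_def[symmetric] using L0 by simp
  show "(n*d+k) mod L = ((n mod L)*d+k) mod L"
    unfolding e q_def[symmetric] r_def[symmetric] by simp
  have "r < L" unfolding r_def using L0 by simp
  then have "Suc r \<le> L" by simp
  then have "Suc r * d \<le> L * d" by (rule mult_right_mono) simp
  then have "r*d+k < d * L" using k by (simp add: mult.commute)
  then show "((n mod L)*d+k) div L < d" unfolding r_def[symmetric] by (rule less_mult_imp_div_less)
qed

lemma morph_concat_ws:
  assumes "\<forall>a. psi a = concat (ws a)"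
  shows "morph_ext psi w = concat (concat (map ws w))"
  using assms by (induction w) (auto simp: morph_ext_def)


theorem theorem4p1:
  fixes W :: "('a :: finite) list set" and psi :: "'a \<Rightarrow> 'a list"
  assumes "finite W" and "W \<noteq> {}" and "[] \<notin> W"
    and "\<forall>u\<in>W. \<forall>v\<in>W. mset u = mset v"
    and "\<forall>a. \<exists>ws. ws \<noteq> [] \<and> set ws \<subseteq> W \<and> psi a = concat ws"
    and "\<exists>a x. iter_fixed_point psi a x"
  shows "\<exists>d::nat. (\<forall>w\<in>W. real (length (morph_ext psi w)) / real (length w) = real d) \<and>
           (\<forall>a x. iter_fixed_point psi a x \<longrightarrow> automatic d x)"
proof -
  obtain ws where ws: "\<forall>a. ws a \<noteq> [] \<and> set (ws a) \<subseteq> W \<and> psi a = concat (ws a)"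
    using assms(5) by metis
  have wsW: "\<forall>a. set (ws a) \<subseteq> W" and psiws: "\<forall>a. psi a = concat (ws a)" using ws by auto
  obtain w0 where w0: "w0 \<in> W" using assms(2) by blast
  define L where "L = length w0"
  have lenW: "\<forall>w\<in>W. length w = L"
  proof
    fix w assume "w \<in> W"
    then have "mset w = mset w0" using assms(4) w0 by blast
    then have "size (mset w) = size (mset w0)" by simp
    then show "length w = L" unfolding L_def by simp
  qed
  have L0: "L > 0" using assms(3) w0 unfolding L_def by (cases w0) auto
  define d where "d = sum_list (map (\<lambda>c. length (ws c)) w0)"
  have dW: "\<forall>w\<in>W. sum_list (map (\<lambda>c. length (ws c)) w) = d"
  proof
    fix w assume "w \<in> W"
    then have m: "mset w = mset w0" using assms(4) w0 by blast
    have "sum_list (map (\<lambda>c. length (ws c)) w) = sum_mset (image_mset (\<lambda>c. length (ws c)) (mset w))"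
      by (simp add: sum_mset_sum_list[symmetric])
    also have "\<dots> = sum_mset (image_mset (\<lambda>c. length (ws c)) (mset w0))" using m by simp
    also have "\<dots> = d" unfolding d_def by (simp add: sum_mset_sum_list[symmetric])
    finally show "sum_list (map (\<lambda>c. length (ws c)) w) = d" .
  qed
  define D where "D w = concat (map ws w)" for w
  have lenwsc: "length (concat (ws c)) = length (ws c) * L" for c
    using wsW lenW by (intro length_concat_uniform) auto
  have lenD: "\<forall>w\<in>W. length (D w) = d"
    using dW by (simp add: D_def length_concat o_def)
  have psiD: "morph_ext psi w = concat (D w)" for w
    unfolding D_def by (rule morph_concat_ws[OF psiws])
  have lenpsiD: "length (morph_ext psi w) = L * d" if "w \<in> W" for w
  proof -
    have "\<forall>v\<in>set (D w). length v = L" using wsW lenW unfolding D_def by auto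
    then have "length (concat (D w)) = length (D w) * L" by (rule length_concat_uniform)
    then show ?thesis using psiD lenD that by simp
  qed
  show ?thesis
  proof (intro exI conjI allI impI ballI)
    fix w assume "w \<in> W"
    then show "real (length (morph_ext psi w)) / real (length w) = real d"
      using lenpsiD lenW L0 by simp
  next
    fix a x assume fp: "iter_fixed_point psi a x"
    obtain u where psia: "psi a = a # u" and lim: "filterlim (\<lambda>n. length ((morph_ext psi ^^ n) [a])) at_top sequentially"
      and xfp: "\<forall>n i. i < length ((morph_ext psi ^^ n) [a]) \<longrightarrow> x i = ((morph_ext psi ^^ n) [a]) ! i"
      using fp unfolding iter_fixed_point_def by blast
    obtain w1 rest where wsa: "ws a = w1 # rest" using ws by (cases "ws a") auto
    have w1W: "w1 \<in> W" using wsW[rule_format, of a] wsa by simp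
    have "w1 @ concat rest = a # u" using psiws psia wsa by simp
    moreover have "w1 \<noteq> []" using w1W assms(3) by auto
    ultimately obtain t where w1: "w1 = a # t" by (cases w1) auto
    have D1: "D w1 ! 0 = w1" unfolding D_def using w1 wsa by simp
    have d2: "d \<ge> 2"
    proof (rule ccontr)
      assume "\<not> d \<ge> 2"
      have dd: "d = length (ws a) + sum_list (map (\<lambda>c. length (ws c)) t)"
        using dW[rule_format, OF w1W] w1 by simp
      have "sum_list (map (\<lambda>c. length (ws c)) t) \<ge> length t"
        using ws by (intro sum_list_ge_length) (auto simp: Suc_le_eq)
      moreover have "length (ws a) \<ge> 1" using wsa by simp
      ultimately have "length t = 0 \<and> length (ws a) = 1" using \<open>\<not> d \<ge> 2\<close> dd by linarith
      then have "t = []" "length (ws a) = 1" by simp_all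
      then have "ws a = [[a]]" using wsa w1 by simp
      then have pa: "psi a = [a]" using psiws by simp
      have "(morph_ext psi ^^ n) [a] = [a]" for n
        by (induction n) (simp_all add: morph_ext_def pa)
      then have "filterlim (\<lambda>n::nat. 1::nat) at_top sequentially" using lim by simp
      then have "eventually (\<lambda>n::nat. (2::nat) \<le> 1) sequentially"
        unfolding filterlim_at_top by blast
      then show False by simp
    qed
    define Om' where "Om' = Om ws d w1"
    have D1': "concat (map ws w1) ! 0 = w1" using D1 unfolding D_def .
    have OmW: "Om' q \<in> W" for q
      unfolding Om'_def using Om_in[OF d2 w1W _ wsW] lenD unfolding D_def by blast
    have Omblock: "D (Om' q) = map (\<lambda>s. Om' (q*d+s)) [0..<d]" for q
      unfolding Om'_def D_def using Om_block[OF d2 D1'] lenD OmW[of q] unfolding Om'_def D_def by blast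
    have Omrec: "Om' (q*d+s) = D (Om' q) ! s" if "s < d" for q s
      using Omblock[of q] that by simp
    have stepP: "morph_ext psi (concat (map Om' [0..<m])) = concat (map Om' [0..<m*d])" for m
    proof (rule concat_step)
      show "morph_ext psi (xs @ ys) = morph_ext psi xs @ morph_ext psi ys" for xs ys
        by (rule morph_ext_append)
      show "morph_ext psi [] = []" by (simp add: morph_ext_def)
      show "morph_ext psi (Om' n) = concat (map (\<lambda>k. Om' (n*d+k)) [0..<d])" for n
        using psiD Omblock by simp
    qed
    have pwP: "(morph_ext psi ^^ n) w1 = concat (map Om' [0..<d^n])" for n
    proof (induction n)
      case 0 then show ?case by (simp add: Om'_def Om_0)
    next
      case (Suc n) then show ?case by (simp add: stepP mult.commute)
    qed
    have xOm: "x i = Om' (i div L) ! (i mod L)" for i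
    proof -
      obtain n where n: "Suc i \<le> length ((morph_ext psi ^^ n) [a])"
        using lim unfolding filterlim_at_top eventually_sequentially by blast
      then have i1: "i < length ((morph_ext psi ^^ n) [a])" by simp
      have splt: "(morph_ext psi ^^ n) w1 = (morph_ext psi ^^ n) [a] @ (morph_ext psi ^^ n) t"
        using funpow_morph_append[where psi=psi and n=n and xs="[a]" and ys=t] w1 by simp
      then have e: "x i = concat (map Om' [0..<d^n]) ! i"
        using xfp i1 pwP[of n] by (simp add: nth_append)
      have lens: "\<forall>xs\<in>set (map Om' [0..<d^n]). length xs = L" using OmW lenW by auto
      have "i < length (concat (map Om' [0..<d^n]))"
        using i1 pwP[of n] splt by (metis length_append trans_less_add1)
      then have "i < d^n * L" using length_concat_uniform[OF lens] by simp
      then have idv: "i div L < d^n" by (rule less_mult_imp_div_less)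
      have "concat (map Om' [0..<d^n]) ! i = map Om' [0..<d^n] ! (i div L) ! (i mod L)"
        by (rule concat_nth_uniform[OF lens]) fact
      also have "\<dots> = Om' (i div L) ! (i mod L)" using idv by simp
      finally show ?thesis using e by simp
    qed
    define y where "y n = (to_nat (Om' (n div L), n mod L) :: nat)" for n
    define tau where "tau m = (case (from_nat m :: 'a list \<times> nat) of (w, j) \<Rightarrow>
        map (\<lambda>k. to_nat (D w ! ((j*d+k) div L), (j*d+k) mod L)) [0..<d])" for m
    define f where "f m = (case (from_nat m :: 'a list \<times> nat) of (w, j) \<Rightarrow> w ! j)" for m
    define B where "B = (to_nat :: 'a list \<times> nat \<Rightarrow> nat) ` (W \<times> {..<L})"
    have tau_code: "tau (to_nat (w, j)) = map (\<lambda>k. to_nat (D w ! ((j*d+k) div L), (j*d+k) mod L)) [0..<d]"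
      for w :: "'a list" and j
      unfolding tau_def by simp
    have ty: "tau (y n) = map (\<lambda>k. y (n*d+k)) [0..<d]" for n
    proof -
      have "tau (y n) = map (\<lambda>k. to_nat (D (Om' (n div L)) ! (((n mod L)*d+k) div L), ((n mod L)*d+k) mod L)) [0..<d]"
        unfolding y_def tau_code ..
      also have "\<dots> = map (\<lambda>k. y (n*d+k)) [0..<d]"
      proof (rule map_cong[OF refl])
        fix k assume "k \<in> set [0..<d]"
        then have k: "k < d" by simp
        note ab = arith_block[OF L0 k, of n]
        show "to_nat (D (Om' (n div L)) ! (((n mod L)*d+k) div L), ((n mod L)*d+k) mod L) = y (n*d+k)"
          unfolding y_def ab(1,2) using Omrec[OF ab(3), of "n div L"] by simp
      qed
      finally show ?thesis .
    qed
    have fy: "x n = f (y n)" for n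
      unfolding f_def y_def using xOm by simp
    have y0: "y 0 = to_nat (w1, 0::nat)" unfolding y_def by (simp add: Om'_def Om_0)
    have Bprop: "\<forall>c\<in>B. length (tau c) = d \<and> set (tau c) \<subseteq> B"
    proof
      fix c assume "c \<in> B"
      then obtain w j where wj: "c = to_nat (w, j)" "w \<in> W" "j < L" unfolding B_def by auto
      have "set (tau c) \<subseteq> B"
      proof
        fix e assume "e \<in> set (tau c)"
        then obtain k where k: "k < d" and e: "e = to_nat (D w ! ((j*d+k) div L), (j*d+k) mod L)"
          using wj(1) tau_code by auto
        have "((j mod L)*d+k) div L < d" by (rule arith_block(3)[OF L0 k])
        then have s: "(j*d+k) div L < length (D w)" using wj lenD by simp
        have "D w ! ((j*d+k) div L) \<in> set (D w)" using s by (rule nth_mem)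
        also have "\<dots> \<subseteq> W" using wsW unfolding D_def by auto
        finally have "D w ! ((j*d+k) div L) \<in> W" .
        moreover have "(j*d+k) mod L < L" using L0 by simp
        ultimately show "e \<in> B" unfolding e B_def by auto
      qed
      then show "length (tau c) = d \<and> set (tau c) \<subseteq> B" using wj(1) tau_code by simp
    qed
    have "iter_fixed_point tau (y 0) y" by (rule uniform_fixed_point[OF d2 ty])
    moreover have "finite B" unfolding B_def using assms(1) by simp
    moreover have "y 0 \<in> B" unfolding y0 B_def using w1W L0 by auto
    ultimately show "automatic d x" unfolding automatic_def using d2 Bprop fy by blast
  qed
qed

end
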